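(* Let $\widetilde W\subset S^{n+1}$ be a spherical convex body. Then $\widetilde W=\widetilde W^{\circ}$ if and only if $\widetilde W$ is of constant width $\pi/2$.
   Context: For $P\in S^{n+1}$, $H(P)=\{Q\in S^{n+1}:P\cdot Q\ge0\}$. A subset of $S^{n+1}$ is hemispherical if it is disjoint from some $H(P)$. The arc $PQ$ is $\{((1-t)P+tQ)/\|(1-t)P+tQ\|:t\in[0,1]\}$, of length $|PQ|=\arccos(P\cdot Q)$. A spherical convex body is a closed hemispherical set with nonempty interior containing the arc $PQ$ for all its points $P,Q$. The spherical polar set is $\widetilde W^\circ=\bigcap_{P\in\widetilde W}H(P)$. $H(P)$ supports $\widetilde W$ if $\widetilde W\subset H(P)$ and $\partial\widetilde W\cap\partial H(P)\ne\emptyset$. The lune $H(P)\cap H(Q)$ ($P\ne\pm Q$) has thickness $\Delta(H(P)\cap H(Q))=\pi-|PQ|$. For $H(P)$ supporting $\widetilde W$, $\mathrm{width}_{H(P)}\widetilde W$ is the minimum of $\Delta(H(P)\cap H(Q))$ over hemispheres $H(Q)$ supporting $\widetilde W$ with $\widetilde W\subset H(P)\cap H(Q)$. $\widetilde W$ is of constant width $\rho$ ($0<\rho<\pi$) if $\mathrm{width}_{H(P)}\widetilde W=\rho$ for every supporting hemisphere $H(P)$. *)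

theory Defs
  imports "HOL-Analysis.Analysis"
begin

text \<open>The unit sphere S^{n+1} sits in a Euclidean space 'a of dimension n+2.\<close>

definition Sph :: "'a::euclidean_space set" where
  "Sph = sphere 0 1"

definition hemi :: "'a::euclidean_space \<Rightarrow> 'a set" where
  "hemi P = {Q \<in> Sph. P \<bullet> Q \<ge> 0}"

definition hemispherical :: "'a::euclidean_space set \<Rightarrow> bool" where
  "hemispherical W \<longleftrightarrow> (\<exists>P \<in> Sph. W \<inter> hemi P = {})"

definition sarc :: "'a::euclidean_space \<Rightarrow> 'a \<Rightarrow> 'a set" where
  "sarc P Q = {((1 - t) *\<^sub>R P + t *\<^sub>R Q) /\<^sub>R norm ((1 - t) *\<^sub>R P + t *\<^sub>R Q) | t. t \<in> {0..1}}"

definition spherical_convex_body :: "'a::euclidean_space set \<Rightarrow> bool" where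
  "spherical_convex_body W \<longleftrightarrow>
     W \<subseteq> Sph \<and> closed W \<and> hemispherical W \<and>
     (top_of_set Sph) interior_of W \<noteq> {} \<and>
     (\<forall>P \<in> W. \<forall>Q \<in> W. sarc P Q \<subseteq> W)"

definition spolar :: "'a::euclidean_space set \<Rightarrow> 'a set" where
  "spolar W = Sph \<inter> (\<Inter>P \<in> W. hemi P)"

definition supports :: "'a::euclidean_space \<Rightarrow> 'a set \<Rightarrow> bool" where
  "supports P W \<longleftrightarrow> W \<subseteq> hemi P \<and>
     (top_of_set Sph) frontier_of W \<inter> (top_of_set Sph) frontier_of (hemi P) \<noteq> {}"

definition lune_thickness :: "'a::euclidean_space \<Rightarrow> 'a \<Rightarrow> real" where
  "lune_thickness P Q = pi - arccos (P \<bullet> Q)"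

definition width_candidates :: "'a::euclidean_space \<Rightarrow> 'a set \<Rightarrow> real set" where
  "width_candidates P W = {lune_thickness P Q | Q. Q \<in> Sph \<and> Q \<noteq> P \<and> Q \<noteq> - P \<and>
      supports Q W \<and> W \<subseteq> hemi P \<inter> hemi Q}"

definition is_width :: "'a::euclidean_space \<Rightarrow> 'a set \<Rightarrow> real \<Rightarrow> bool" where
  "is_width P W w \<longleftrightarrow> w \<in> width_candidates P W \<and> (\<forall>x \<in> width_candidates P W. w \<le> x)"

definition constant_width :: "'a::euclidean_space set \<Rightarrow> real \<Rightarrow> bool" where
  "constant_width W \<rho> \<longleftrightarrow> 0 < \<rho> \<and> \<rho> < pi \<and>
     (\<forall>P \<in> Sph. supports P W \<longrightarrow> is_width P W \<rho>)"

end

theory Submission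
  imports Defs
begin


lemma Sph_iff: "x \<in> Sph \<longleftrightarrow> x \<bullet> x = 1"
  by (simp add: Sph_def norm_eq_1)

lemma Sph_norm: "x \<in> Sph \<Longrightarrow> norm x = 1"
  by (simp add: Sph_def)

lemma inner_bound:
  assumes "x \<in> Sph" "y \<in> Sph"
  shows "-1 \<le> x \<bullet> y" "x \<bullet> y \<le> 1"
proof -
  have "\<bar>x \<bullet> y\<bar> \<le> 1" using Cauchy_Schwarz_ineq2[of x y] assms by (simp add: Sph_norm)
  then show "-1 \<le> x \<bullet> y" "x \<bullet> y \<le> 1" by auto
qed

lemma near_point:
  fixes Z R :: "'a::euclidean_space"
  assumes "open U" "Z \<in> U"
  shows "\<exists>e. 0 < e \<and> e < pi \<and> cos e *\<^sub>R Z + sin e *\<^sub>R R \<in> U"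
proof -
  have "((\<lambda>e. cos e *\<^sub>R Z + sin e *\<^sub>R R) \<longlongrightarrow> cos 0 *\<^sub>R Z + sin 0 *\<^sub>R R) (at_right 0)"
    by (intro tendsto_intros)
  hence "((\<lambda>e. cos e *\<^sub>R Z + sin e *\<^sub>R R) \<longlongrightarrow> Z) (at_right 0)" by simp
  hence e1: "\<forall>\<^sub>F e in at_right 0. cos e *\<^sub>R Z + sin e *\<^sub>R R \<in> U"
    using topological_tendstoD assms by blast
  have e2: "\<forall>\<^sub>F e in at_right (0::real). e \<in> {0<..<pi}"
    by (rule eventually_at_right_real) simp
  from eventually_conj[OF e1 e2] have "\<forall>\<^sub>F e in at_right (0::real). cos e *\<^sub>R Z + sin e *\<^sub>R R \<in> U \<and> e \<in> {0<..<pi}" .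
  from eventually_happens[OF this] show ?thesis by auto
qed

lemma circ_Sph:
  assumes "Z \<in> Sph" "R \<in> Sph" "Z \<bullet> R = 0"
  shows "cos e *\<^sub>R Z + sin e *\<^sub>R R \<in> Sph"
proof -
  have "(cos e *\<^sub>R Z + sin e *\<^sub>R R) \<bullet> (cos e *\<^sub>R Z + sin e *\<^sub>R R)
      = (cos e)^2 * (Z \<bullet> Z) + (sin e)^2 * (R \<bullet> R) + 2 * cos e * sin e * (Z \<bullet> R)"
    by (simp add: inner_add_left inner_add_right inner_commute power2_eq_square algebra_simps)
  also have "\<dots> = 1" using assms by (simp add: Sph_iff)
  finally show ?thesis by (simp add: Sph_iff)
qed

lemma not_interior:
  fixes S :: "'a::euclidean_space set"
  assumes "S \<subseteq> Sph" "S \<subseteq> hemi R" "R \<in> Sph" "Z \<in> S" "Z \<bullet> R = 0"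
  shows "Z \<in> (top_of_set Sph) frontier_of S"
proof -
  have "Z \<in> (top_of_set Sph) closure_of S"
    using closure_of_subset[of S "top_of_set Sph"] assms by auto
  moreover have "Z \<notin> (top_of_set Sph) interior_of S"
  proof
    assume "Z \<in> (top_of_set Sph) interior_of S"
    then obtain T where T: "openin (top_of_set Sph) T" "Z \<in> T" "T \<subseteq> S"
      unfolding interior_of_def by auto
    then obtain U where U: "open U" "T = Sph \<inter> U" by (auto simp: openin_open)
    from near_point[OF U(1), of Z "-R"] T U obtain e where
      e: "0 < e" "e < pi" "cos e *\<^sub>R Z + sin e *\<^sub>R (-R) \<in> U" by auto
    have "Z \<in> Sph" using assms by auto
    have "-R \<in> Sph" using assms by (simp add: Sph_iff)
    have "cos e *\<^sub>R Z + sin e *\<^sub>R (-R) \<in> Sph"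
      by (rule circ_Sph) (use \<open>Z \<in> Sph\<close> \<open>-R \<in> Sph\<close> assms in auto)
    with e U T have "cos e *\<^sub>R Z + sin e *\<^sub>R (-R) \<in> hemi R" using assms by auto
    hence "0 \<le> R \<bullet> (cos e *\<^sub>R Z + sin e *\<^sub>R (-R))" by (simp add: hemi_def)
    also have "R \<bullet> (cos e *\<^sub>R Z + sin e *\<^sub>R (-R)) = - sin e"
      using assms by (simp add: inner_add_right inner_diff_right inner_commute Sph_iff)
    finally show False using sin_gt_zero[OF e(1,2)] by simp
  qed
  ultimately show ?thesis by (simp add: frontier_of_def)
qed

lemma supp_lemma:
  assumes "W \<subseteq> Sph" "R \<in> Sph" "W \<subseteq> hemi R" "Z \<in> W" "Z \<bullet> R = 0"
  shows "supports R W"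
proof -
  have "Z \<in> (top_of_set Sph) frontier_of W" by (rule not_interior) (use assms in auto)
  moreover have "Z \<in> (top_of_set Sph) frontier_of (hemi R)"
    by (rule not_interior) (use assms in \<open>auto simp: hemi_def inner_commute\<close>)
  ultimately show ?thesis using assms by (auto simp: supports_def)
qed

lemma interior_dot:
  assumes "W \<subseteq> Sph" "(top_of_set Sph) interior_of W \<noteq> {}" "P \<in> Sph"
  shows "\<exists>Z\<in>W. Z \<bullet> P \<noteq> 0"
proof -
  obtain Z0 where Z0: "Z0 \<in> (top_of_set Sph) interior_of W" using assms by auto
  then obtain T where T: "openin (top_of_set Sph) T" "Z0 \<in> T" "T \<subseteq> W"
    unfolding interior_of_def by auto
  then obtain U where U: "open U" "T = Sph \<inter> U" by (auto simp: openin_open)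
  show ?thesis
  proof (cases "Z0 \<bullet> P = 0")
    case False then show ?thesis using T by auto
  next
    case True
    from near_point[OF U(1), of Z0 P] T U obtain e where
      e: "0 < e" "e < pi" "cos e *\<^sub>R Z0 + sin e *\<^sub>R P \<in> U" by auto
    have "cos e *\<^sub>R Z0 + sin e *\<^sub>R P \<in> Sph"
      by (rule circ_Sph) (use True T assms in auto)
    with e U T have "cos e *\<^sub>R Z0 + sin e *\<^sub>R P \<in> W" by auto
    moreover have "(cos e *\<^sub>R Z0 + sin e *\<^sub>R P) \<bullet> P = sin e"
      using True assms by (simp add: inner_add_left Sph_iff)
    ultimately show ?thesis using sin_gt_zero[OF e(1,2)] by (intro bexI[of _ "cos e *\<^sub>R Z0 + sin e *\<^sub>R P"]) auto
  qed
qed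

lemma frontier_hemi_dot:
  assumes "P \<in> Sph" "X \<in> (top_of_set Sph) frontier_of (hemi P)"
  shows "X \<in> Sph" "X \<bullet> P = 0"
proof -
  have cl: "closedin (top_of_set Sph) (hemi P)"
  proof -
    have "hemi P = Sph \<inter> {x. 0 \<le> P \<bullet> x}" by (auto simp: hemi_def)
    thus ?thesis using closed_halfspace_ge[of 0 P] by (auto simp: closedin_closed)
  qed
  have Xc: "X \<in> hemi P" using assms(2) closure_of_closedin[OF cl] by (auto simp: frontier_of_def)
  thus "X \<in> Sph" by (simp add: hemi_def)
  have "\<not> (P \<bullet> X > 0)"
  proof
    assume pos: "P \<bullet> X > 0"
    have "openin (top_of_set Sph) (Sph \<inter> {x. 0 < P \<bullet> x})"
      using open_halfspace_gt[of 0 P] by (auto simp: openin_open)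
    moreover have "Sph \<inter> {x. 0 < P \<bullet> x} \<subseteq> hemi P" by (auto simp: hemi_def)
    ultimately have "Sph \<inter> {x. 0 < P \<bullet> x} \<subseteq> (top_of_set Sph) interior_of (hemi P)"
      by (rule interior_of_maximal[rotated])
    with pos \<open>X \<in> Sph\<close> assms(2) show False by (auto simp: frontier_of_def)
  qed
  with Xc show "X \<bullet> P = 0" by (auto simp: hemi_def inner_commute)
qed



lemma first_order:
  fixes X Y Z :: "'a::euclidean_space"
  assumes XS: "X \<in> Sph" and YS: "Y \<in> Sph" and ZS: "Z \<in> Sph" and arc: "sarc X Z \<subseteq> Sph"
    and c0: "X \<bullet> Y \<le> 0" and mn: "\<forall>V\<in>sarc X Z. X \<bullet> Y \<le> V \<bullet> Y"
  shows "(X \<bullet> Y) * (X \<bullet> Z) \<le> Z \<bullet> Y"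
proof (rule ccontr)
  define c where "c = X \<bullet> Y"
  define a where "a = Z \<bullet> Y"
  define b where "b = X \<bullet> Z"
  assume "\<not> ?thesis"
  hence dpos: "c * b - a > 0" by (simp add: c_def a_def b_def)
  have cb: "-1 \<le> c" "c \<le> 1" using inner_bound[OF XS YS] by (auto simp: c_def)
  have ab: "-1 \<le> a" "a \<le> 1" using inner_bound[OF ZS YS] by (auto simp: a_def)
  have bb: "-1 \<le> b" "b \<le> 1" using inner_bound[OF XS ZS] by (auto simp: b_def)
  have "c * b \<le> 1"
  proof -
    have "\<bar>c * b\<bar> \<le> 1" using cb bb by (simp add: abs_mult mult_le_one)
    thus ?thesis by simp
  qed
  define d where "d = c * b - a"
  define t where "t = d / 4"
  have t0: "0 < t" "t \<le> 1/2" using dpos \<open>c * b \<le> 1\<close> ab by (auto simp: t_def d_def)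
  define V where "V = (1 - t) *\<^sub>R X + t *\<^sub>R Z"
  define n where "n = norm V"
  have "V /\<^sub>R n \<in> sarc X Z" unfolding sarc_def V_def n_def using t0 by auto
  hence inS: "V /\<^sub>R n \<in> Sph" using arc by auto
  have n0: "n \<noteq> 0"
  proof
    assume "n = 0"
    hence "V /\<^sub>R n = 0" by simp
    with inS show False by (simp add: Sph_iff)
  qed
  have npos: "n > 0" using n0 by (simp add: n_def)
  have "c \<le> (V /\<^sub>R n) \<bullet> Y" using mn \<open>V /\<^sub>R n \<in> sarc X Z\<close> by (auto simp: c_def)
  also have "(V /\<^sub>R n) \<bullet> Y = (V \<bullet> Y) / n" by (simp add: divide_inverse mult.commute)
  finally have "c * n \<le> V \<bullet> Y" using npos by (simp add: pos_le_divide_eq)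
  have VY: "V \<bullet> Y = (1 - t) * c + t * a"
    by (simp add: V_def inner_add_left c_def a_def)
  define u where "u = t * (1 - b) * (1 - t)"
  have u0: "0 \<le> u" using t0 bb by (simp add: u_def)
  have u1: "u \<le> 1/2"
  proof -
    have "t * (1 - t) \<le> 1/4"
    proof -
      have "0 \<le> (t - 1/2)^2" by simp
      thus ?thesis by (simp add: power2_eq_square algebra_simps)
    qed
    moreover have "0 \<le> t * (1 - t)" using t0 by simp
    moreover have "1 - b \<le> 2" "0 \<le> 1 - b" using bb by auto
    ultimately have "(1 - b) * (t * (1 - t)) \<le> 2 * (1/4)"
      by (intro mult_mono) auto
    thus ?thesis by (simp add: u_def algebra_simps)
  qed
  have VV: "V \<bullet> V = 1 - 2 * u"
  proof -
    have "V \<bullet> V = (1 - t)^2 * (X \<bullet> X) + 2 * t * (1 - t) * (X \<bullet> Z) + t^2 * (Z \<bullet> Z)"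
      by (simp add: V_def inner_add_left inner_add_right inner_commute power2_eq_square algebra_simps)
    also have "\<dots> = (1 - t)^2 + 2 * t * (1 - t) * b + t^2"
      using XS ZS by (simp add: Sph_iff b_def)
    also have "\<dots> = 1 - 2 * u" by (simp add: u_def power2_eq_square algebra_simps)
    finally show ?thesis .
  qed
  have "n \<le> 1 - u"
  proof (rule power2_le_imp_le)
    have "n^2 = 1 - 2 * u" by (simp add: n_def power2_norm_eq_inner VV)
    also have "\<dots> \<le> (1 - u)^2" by (simp add: power2_eq_square algebra_simps)
    finally show "n^2 \<le> (1 - u)^2" .
    show "0 \<le> 1 - u" using u1 by simp
  qed
  hence "c * (1 - u) \<le> c * n" using c0 by (intro mult_left_mono_neg) (auto simp: c_def)
  with \<open>c * n \<le> V \<bullet> Y\<close> VY have main: "c - c * u \<le> (1 - t) * c + t * a" by (simp add: algebra_simps)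
  hence "t * (c * b - a) \<le> t * (- c * t * (1 - b))"
    by (simp add: u_def algebra_simps)
  hence "c * b - a \<le> - c * t * (1 - b)" using t0 mult_le_cancel_left_pos[of t "c * b - a" "- c * t * (1 - b)"] by simp
  also have "- c * t * (1 - b) \<le> 2 * t"
  proof -
    have "-c \<le> 1" using cb by simp
    have "(-c) * (1 - b) \<le> 1 * 2" using cb bb by (intro mult_mono) auto
    hence "(-c) * (1 - b) * t \<le> 2 * t" using t0 by (intro mult_right_mono) auto
    thus ?thesis by (simp add: algebra_simps)
  qed
  finally have "d \<le> 2 * t" by (simp add: d_def)
  with dpos show False by (simp add: t_def d_def mult.commute)
qed



lemma arccos_half_pi:
  assumes "-1 \<le> x" "x \<le> 1" "arccos x = pi / 2"
  shows "x = 0"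
proof -
  have "x = cos (arccos x)" using assms by simp
  also have "\<dots> = 0" by (simp only: assms(3) cos_pi_half)
  finally show ?thesis .
qed

lemma width_zero:
  assumes cw: "constant_width W (pi / 2)" and PS: "P \<in> Sph" and sp: "supports P W"
  shows "\<exists>Q. Q \<in> Sph \<and> Q \<noteq> P \<and> Q \<noteq> - P \<and> supports Q W \<and> W \<subseteq> hemi P \<inter> hemi Q \<and> P \<bullet> Q = 0"
proof -
  have "pi / 2 \<in> width_candidates P W" using cw PS sp by (auto simp: constant_width_def is_width_def)
  then obtain Q where Q: "pi / 2 = lune_thickness P Q" "Q \<in> Sph" "Q \<noteq> P" "Q \<noteq> - P"
      "supports Q W" "W \<subseteq> hemi P \<inter> hemi Q"
    unfolding width_candidates_def by blast
  have "arccos (P \<bullet> Q) = pi / 2" using Q(1) by (simp add: lune_thickness_def)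
  hence "P \<bullet> Q = 0" using arccos_half_pi inner_bound[OF PS Q(2)] by blast
  with Q show ?thesis by blast
qed

lemma width_nonneg:
  assumes cw: "constant_width W (pi / 2)" and PS: "P \<in> Sph" and sp: "supports P W"
    and QS: "Q \<in> Sph" "Q \<noteq> P" "Q \<noteq> - P" "supports Q W" "W \<subseteq> hemi P \<inter> hemi Q"
  shows "0 \<le> P \<bullet> Q"
proof (rule ccontr)
  assume neg: "\<not> 0 \<le> P \<bullet> Q"
  have "lune_thickness P Q \<in> width_candidates P W" using QS unfolding width_candidates_def by blast
  moreover have "is_width P W (pi / 2)" using cw PS sp by (auto simp: constant_width_def)
  ultimately have "pi / 2 \<le> pi - arccos (P \<bullet> Q)" by (auto simp: is_width_def lune_thickness_def)
  moreover have "arccos 0 < arccos (P \<bullet> Q)"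
    using neg inner_bound[OF PS QS(1)] by (intro arccos_less_arccos) auto
  ultimately show False by simp
qed

lemma unit_eq:
  assumes "X \<in> Sph" "Y \<in> Sph" "X \<bullet> Y = -1"
  shows "Y = - X"
proof -
  have "(X + Y) \<bullet> (X + Y) = 0" using assms
    by (simp add: inner_add_left inner_add_right inner_commute Sph_iff)
  hence "X + Y = 0" by (simp only: inner_eq_zero_iff)
  thus ?thesis by (metis add.commute add_eq_0_iff2 minus_unique)
qed

lemma unit_eq1:
  assumes "X \<in> Sph" "Y \<in> Sph" "X \<bullet> Y = 1"
  shows "Y = X"
proof -
  have "(X - Y) \<bullet> (X - Y) = 0" using assms
    by (simp add: inner_diff_left inner_diff_right inner_commute Sph_iff)
  thus ?thesis by simp
qed

lemma sarc_antipodal: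
  assumes "sarc X (-X) \<subseteq> Sph"
  shows False
proof -
  have "((1 - 1/2) *\<^sub>R X + (1/2) *\<^sub>R (-X)) /\<^sub>R norm ((1 - 1/2) *\<^sub>R X + (1/2::real) *\<^sub>R (-X)) \<in> sarc X (-X)"
    unfolding sarc_def by (intro CollectI exI[of _ "1/2::real"]) auto
  moreover have "(1 - 1/2) *\<^sub>R X + (1/2::real) *\<^sub>R (-X) = 0"
    by (simp add: scaleR_minus_right)
  ultimately have "(0::'a) \<in> sarc X (-X)" by (simp only: scaleR_zero_right)
  with assms show False by (auto simp: Sph_iff)
qed



lemma scb_basic:
  assumes "spherical_convex_body W"
  shows "W \<subseteq> Sph" "closed W" "compact W" "W \<noteq> {}" "\<And>P Q. P \<in> W \<Longrightarrow> Q \<in> W \<Longrightarrow> sarc P Q \<subseteq> W"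
    "(top_of_set Sph) interior_of W \<noteq> {}"
proof -
  show WS: "W \<subseteq> Sph" "closed W" "(top_of_set Sph) interior_of W \<noteq> {}"
    using assms by (auto simp: spherical_convex_body_def)
  show "compact W" using WS bounded_subset[OF bounded_sphere[of 0 1]]
    by (auto simp: compact_eq_bounded_closed Sph_def)
  show "W \<noteq> {}" using WS interior_of_subset[of "top_of_set Sph" W] by auto
  show "\<And>P Q. P \<in> W \<Longrightarrow> Q \<in> W \<Longrightarrow> sarc P Q \<subseteq> W"
    using assms by (auto simp: spherical_convex_body_def)
qed

lemma goal2:
  fixes W :: "'a::euclidean_space set"
  assumes scb: "spherical_convex_body W" and cw: "constant_width W (pi / 2)"
  shows "W \<subseteq> spolar W"
proof (rule ccontr)
  note B = scb_basic[OF scb]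
  have WS: "W \<subseteq> Sph" using B by auto
  assume "\<not> W \<subseteq> spolar W"
  then obtain X0 where X0: "X0 \<in> W" "X0 \<notin> spolar W" by blast
  then obtain Y0 where "Y0 \<in> W" "X0 \<notin> hemi Y0" using WS by (auto simp: spolar_def)
  hence X0Y0: "X0 \<in> W" "Y0 \<in> W" "Y0 \<bullet> X0 < 0" using X0 WS by (auto simp: hemi_def)
  have "compact (W \<times> W)" using B by (intro compact_Times) auto
  moreover have "W \<times> W \<noteq> {}" using B by auto
  moreover have "continuous_on (W \<times> W) (\<lambda>p. fst p \<bullet> snd p)" by (intro continuous_intros)
  ultimately obtain pm where pm: "pm \<in> W \<times> W" "\<forall>q\<in>W \<times> W. fst pm \<bullet> snd pm \<le> fst q \<bullet> snd q"
    using continuous_attains_inf by blast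
  obtain X Y where XY: "pm = (X, Y)" by (cases pm)
  have XW: "X \<in> W" and YW: "Y \<in> W" using pm XY by auto
  have mn: "\<And>V U. V \<in> W \<Longrightarrow> U \<in> W \<Longrightarrow> X \<bullet> Y \<le> V \<bullet> U" using pm XY by force
  define c where "c = X \<bullet> Y"
  have XS: "X \<in> Sph" and YS: "Y \<in> Sph" using XW YW WS by auto
  have cneg: "c < 0" using mn[OF X0Y0(2,1)] X0Y0 by (simp add: c_def)
  have cm1: "c \<noteq> -1"
  proof
    assume "c = -1"
    hence "Y = - X" using unit_eq[OF XS YS] by (simp add: c_def)
    thus False using B(5)[OF XW YW] WS sarc_antipodal[of X] by auto
  qed
  have cb: "-1 \<le> c" using inner_bound[OF XS YS] by (simp add: c_def)
  have fo: "\<And>Z. Z \<in> W \<Longrightarrow> c * (X \<bullet> Z) \<le> Z \<bullet> Y"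
  proof -
    fix Z assume ZW: "Z \<in> W"
    show "c * (X \<bullet> Z) \<le> Z \<bullet> Y" unfolding c_def
    proof (rule first_order[OF XS YS])
      show "Z \<in> Sph" using ZW WS by auto
      show "sarc X Z \<subseteq> Sph" using B(5)[OF XW ZW] WS by auto
      show "X \<bullet> Y \<le> 0" using cneg by (simp add: c_def)
      show "\<forall>V\<in>sarc X Z. X \<bullet> Y \<le> V \<bullet> Y" using B(5)[OF XW ZW] mn YW by auto
    qed
  qed
  define p where "p = Y - c *\<^sub>R X"
  define s where "s = norm p"
  have "p \<bullet> p = Y \<bullet> Y - 2 * c * (X \<bullet> Y) + c * c * (X \<bullet> X)"
    by (simp add: p_def inner_diff_left inner_diff_right inner_commute algebra_simps)
  hence pp: "p \<bullet> p = 1 - c^2" using XS YS by (simp add: Sph_iff c_def[symmetric] power2_eq_square)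
  have "c^2 < 1"
  proof -
    have "0 < (1 + c) * (1 - c)" using cb cm1 cneg by (intro mult_pos_pos) auto
    thus ?thesis by (simp add: power2_eq_square algebra_simps)
  qed
  hence spos: "s > 0" using pp by (auto simp: s_def)
  define P where "P = p /\<^sub>R s"
  have PS: "P \<in> Sph" using spos by (simp add: P_def Sph_def s_def)
  have sP: "s *\<^sub>R P = p" using spos by (simp add: P_def)
  have PX: "P \<bullet> X = 0" using XS spos
    by (simp add: P_def p_def inner_diff_left inner_diff_right Sph_iff c_def inner_commute)
  have ZP: "\<And>Z. Z \<in> W \<Longrightarrow> 0 \<le> Z \<bullet> P"
  proof -
    fix Z assume "Z \<in> W"
    hence "c * (X \<bullet> Z) \<le> Z \<bullet> Y" by (rule fo)
    hence "0 \<le> Z \<bullet> p" by (simp add: p_def inner_diff_right inner_commute)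
    thus "0 \<le> Z \<bullet> P" using spos by (simp add: P_def)
  qed
  have Ydec: "\<And>Q. Q \<bullet> Y = c * (Q \<bullet> X) + s * (Q \<bullet> P)"
  proof -
    fix Q
    have "Y = c *\<^sub>R X + s *\<^sub>R P" using sP by (simp add: p_def)
    thus "Q \<bullet> Y = c * (Q \<bullet> X) + s * (Q \<bullet> P)" by (simp add: inner_add_right)
  qed
  have claim: "\<exists>F. finite F \<and> card F = k \<and> F \<subseteq> Sph \<and>
      (\<forall>Q\<in>F. supports Q W \<and> Q \<bullet> X = 0 \<and> Q \<bullet> P = 0) \<and>
      (\<forall>Q\<in>F. \<forall>Q'\<in>F. Q \<noteq> Q' \<longrightarrow> Q \<bullet> Q' = 0)" for k
  proof (induction k)
    case 0
    show ?case by (intro exI[of _ "{}"]) auto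
  next
    case (Suc k)
    then obtain F where F: "finite F" "card F = k" "F \<subseteq> Sph"
      "\<forall>Q\<in>F. supports Q W \<and> Q \<bullet> X = 0 \<and> Q \<bullet> P = 0"
      "\<forall>Q\<in>F. \<forall>Q'\<in>F. Q \<noteq> Q' \<longrightarrow> Q \<bullet> Q' = 0" by blast
    define v where "v = P + (\<Sum>Q\<in>F. Q)"
    have vdot: "\<And>Z. Z \<bullet> v = Z \<bullet> P + (\<Sum>Q\<in>F. Z \<bullet> Q)"
      by (simp add: v_def inner_add_right inner_sum_right)
    have vQ: "Q \<bullet> v = 1" if QF: "Q \<in> F" for Q
    proof -
      have "(\<Sum>Q'\<in>F. Q \<bullet> Q') = Q \<bullet> Q + (\<Sum>Q'\<in>F - {Q}. Q \<bullet> Q')"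
        using F(1) QF by (simp add: sum.remove)
      also have "(\<Sum>Q'\<in>F - {Q}. Q \<bullet> Q') = 0" using F(5) QF by (intro sum.neutral) auto
      finally have "(\<Sum>Q'\<in>F. Q \<bullet> Q') = 1" using QF F(3) by (auto simp: Sph_iff)
      moreover have "Q \<bullet> P = 0" using QF F(4) by auto
      ultimately show ?thesis using vdot[of Q] by simp
    qed
    have vP: "P \<bullet> v = 1"
    proof -
      have "(\<Sum>Q\<in>F. P \<bullet> Q) = 0" using F(4) by (intro sum.neutral) (auto simp: inner_commute)
      thus ?thesis using vdot[of P] PS by (simp add: Sph_iff)
    qed
    have vX: "X \<bullet> v = 0"
    proof -
      have "(\<Sum>Q\<in>F. X \<bullet> Q) = 0" using F(4) by (intro sum.neutral) (auto simp: inner_commute)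
      thus ?thesis using vdot[of X] PX by (simp add: inner_commute)
    qed
    have Zv: "0 \<le> Z \<bullet> v" if ZW: "Z \<in> W" for Z
    proof -
      have "0 \<le> (\<Sum>Q\<in>F. Z \<bullet> Q)"
      proof (intro sum_nonneg)
        fix Q assume "Q \<in> F"
        hence "W \<subseteq> hemi Q" using F(4) by (auto simp: supports_def)
        thus "0 \<le> Z \<bullet> Q" using ZW by (auto simp: hemi_def inner_commute)
      qed
      thus ?thesis using vdot[of Z] ZP[OF ZW] by simp
    qed
    have vnz: "v \<noteq> 0" using vP by auto
    define R where "R = v /\<^sub>R norm v"
    have RS: "R \<in> Sph" using vnz by (simp add: R_def Sph_def)
    have Rdot: "\<And>Z. Z \<bullet> R = (Z \<bullet> v) / norm v" by (simp add: R_def divide_inverse mult.commute)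
    have WR: "W \<subseteq> hemi R" using WS Zv by (auto simp: hemi_def Rdot inner_commute)
    have XR: "X \<bullet> R = 0" using Rdot[of X] vX by simp
    have suppR: "supports R W" by (rule supp_lemma[OF WS RS WR XW XR])
    obtain Q' where Q': "Q' \<in> Sph" "Q' \<noteq> R" "Q' \<noteq> - R" "supports Q' W" "W \<subseteq> hemi R \<inter> hemi Q'"
      "R \<bullet> Q' = 0" using width_zero[OF cw RS suppR] by blast
    have Q'v: "Q' \<bullet> v = 0" using Rdot[of Q'] Q'(6) vnz by (simp add: inner_commute)
    have WQ': "W \<subseteq> hemi Q'" using Q' by auto
    have QQ': "0 \<le> Q' \<bullet> Q" if QF: "Q \<in> F" for Q
    proof -
      have "0 \<le> Q \<bullet> Q'"
      proof (rule width_nonneg[OF cw])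
        show "Q \<in> Sph" "supports Q W" using QF F by auto
        show "Q' \<in> Sph" "supports Q' W" using Q' by auto
        show "Q' \<noteq> Q" using vQ[OF QF] Q'v by auto
        show "Q' \<noteq> - Q" using vQ[OF QF] Q'v by auto
        show "W \<subseteq> hemi Q \<inter> hemi Q'" using WQ' QF F(4) by (auto simp: supports_def)
      qed
      thus ?thesis by (simp add: inner_commute)
    qed
    have Q'X: "0 \<le> Q' \<bullet> X" using WQ' XW by (auto simp: hemi_def)
    have Q'Y: "0 \<le> Q' \<bullet> Y" using WQ' YW by (auto simp: hemi_def)
    have "0 \<le> s * (Q' \<bullet> P)"
    proof -
      have "0 \<le> -c * (Q' \<bullet> X)" using cneg Q'X by (intro mult_nonneg_nonneg) auto
      thus ?thesis using Q'Y Ydec[of Q'] by simp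
    qed
    hence Q'P0: "0 \<le> Q' \<bullet> P" using spos by (simp add: zero_le_mult_iff)
    have sum0: "0 \<le> (\<Sum>Q\<in>F. Q' \<bullet> Q)" using QQ' by (intro sum_nonneg) auto
    have "Q' \<bullet> P + (\<Sum>Q\<in>F. Q' \<bullet> Q) = 0" using vdot[of Q'] Q'v by simp
    hence Q'P: "Q' \<bullet> P = 0" and "(\<Sum>Q\<in>F. Q' \<bullet> Q) = 0" using Q'P0 sum0 by linarith+
    hence Q'F: "\<forall>Q\<in>F. Q' \<bullet> Q = 0" using sum_nonneg_eq_0_iff[OF F(1), of "\<lambda>Q. Q' \<bullet> Q"] QQ' by auto
    have "0 \<le> c * (Q' \<bullet> X)" using Q'Y Ydec[of Q'] Q'P by simp
    hence Q'X0: "Q' \<bullet> X = 0" using cneg Q'X by (simp add: zero_le_mult_iff)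
    have Q'notF: "Q' \<notin> F" using Q'F Q'(1) by (auto simp: Sph_iff)
    show ?case
    proof (intro exI[of _ "insert Q' F"] conjI)
      show "finite (insert Q' F)" using F by simp
      show "card (insert Q' F) = Suc k" using F Q'notF by simp
      show "insert Q' F \<subseteq> Sph" using F Q' by auto
      show "\<forall>Q\<in>insert Q' F. supports Q W \<and> Q \<bullet> X = 0 \<and> Q \<bullet> P = 0"
        using F(4) Q'(4) Q'X0 Q'P by auto
      show "\<forall>Q\<in>insert Q' F. \<forall>Q''\<in>insert Q' F. Q \<noteq> Q'' \<longrightarrow> Q \<bullet> Q'' = 0"
        using F(5) Q'F by (auto simp: inner_commute)
    qed
  qed
  obtain F where F: "finite F" "card F = DIM('a)" "F \<subseteq> Sph"
      "\<forall>Q\<in>F. supports Q W \<and> Q \<bullet> X = 0 \<and> Q \<bullet> P = 0"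
      "\<forall>Q\<in>F. \<forall>Q'\<in>F. Q \<noteq> Q' \<longrightarrow> Q \<bullet> Q' = 0" using claim by blast
  have XnF: "X \<notin> F" using F(4) XS by (auto simp: Sph_iff)
  have "pairwise orthogonal (insert X F)"
    using F(4,5) by (auto simp: pairwise_def orthogonal_def inner_commute)
  moreover have "0 \<notin> insert X F" using F(3) XS by (auto simp: Sph_iff)
  ultimately have "independent (insert X F)" by (rule pairwise_orthogonal_independent)
  hence "card (insert X F) \<le> DIM('a)" using independent_bound by blast
  with F XnF show False by simp
qed



lemma goal1:
  fixes W :: "'a::euclidean_space set"
  assumes scb: "spherical_convex_body W" and cw: "constant_width W (pi / 2)"
  shows "spolar W \<subseteq> W"
proof
  note B = scb_basic[OF scb]
  have WS: "W \<subseteq> Sph" using B by auto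
  fix X assume Xp: "X \<in> spolar W"
  show "X \<in> W"
  proof (rule ccontr)
    assume XnW: "X \<notin> W"
    have XS: "X \<in> Sph" using Xp by (auto simp: spolar_def)
    have XZ: "\<And>Z. Z \<in> W \<Longrightarrow> 0 \<le> Z \<bullet> X" using Xp by (auto simp: spolar_def hemi_def)
    have "continuous_on W (\<lambda>Y. X \<bullet> Y)" by (intro continuous_intros)
    then obtain Y where YW: "Y \<in> W" and mx: "\<forall>Z\<in>W. X \<bullet> Z \<le> X \<bullet> Y"
      using continuous_attains_sup[OF B(3) B(4)] by blast
    define c where "c = X \<bullet> Y"
    have YS: "Y \<in> Sph" using YW WS by auto
    have c0: "0 \<le> c" using XZ[OF YW] by (simp add: c_def inner_commute)
    have c1: "c < 1"
    proof -
      have "c \<le> 1" using inner_bound[OF XS YS] by (simp add: c_def)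
      moreover have "c \<noteq> 1" using unit_eq1[OF XS YS] XnW YW by (auto simp: c_def)
      ultimately show ?thesis by simp
    qed
    have mXS: "-X \<in> Sph" using XS by (simp add: Sph_iff)
    have fo: "Z \<bullet> X \<le> c * (Y \<bullet> Z)" if ZW: "Z \<in> W" for Z
    proof -
      have "(Y \<bullet> (-X)) * (Y \<bullet> Z) \<le> Z \<bullet> (-X)"
      proof (rule first_order[OF YS mXS])
        show "Z \<in> Sph" using ZW WS by auto
        show "sarc Y Z \<subseteq> Sph" using B(5)[OF YW ZW] WS by auto
        show "Y \<bullet> - X \<le> 0" using c0 by (simp add: c_def inner_commute)
        show "\<forall>V\<in>sarc Y Z. Y \<bullet> - X \<le> V \<bullet> - X"
          using B(5)[OF YW ZW] mx by (auto simp: inner_commute)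
      qed
      thus ?thesis by (simp add: c_def inner_commute)
    qed
    define p where "p = c *\<^sub>R Y - X"
    define s where "s = norm p"
    have "p \<bullet> p = c * c * (Y \<bullet> Y) - 2 * c * (X \<bullet> Y) + X \<bullet> X"
      by (simp add: p_def inner_diff_left inner_diff_right inner_commute algebra_simps)
    hence pp: "p \<bullet> p = 1 - c^2" using XS YS by (simp add: Sph_iff c_def[symmetric] power2_eq_square)
    have "c^2 < 1"
    proof -
      have "0 < (1 + c) * (1 - c)" using c0 c1 by (intro mult_pos_pos) auto
      thus ?thesis by (simp add: power2_eq_square algebra_simps)
    qed
    hence spos: "s > 0" using pp by (auto simp: s_def)
    define P where "P = p /\<^sub>R s"
    have PS: "P \<in> Sph" using spos by (simp add: P_def Sph_def s_def)
    have PY: "Y \<bullet> P = 0" using YS spos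
      by (simp add: P_def p_def inner_diff_left inner_diff_right Sph_iff c_def inner_commute)
    have "X \<bullet> p = c * c - 1" using XS
      by (simp add: p_def inner_diff_right Sph_iff c_def)
    moreover have "inverse s > 0" using spos by simp
    ultimately have PX: "X \<bullet> P < 0" using \<open>c^2 < 1\<close>
      by (simp add: P_def power2_eq_square mult_pos_neg)
    have ZP: "0 \<le> Z \<bullet> P" if ZW: "Z \<in> W" for Z
    proof -
      have "Z \<bullet> X \<le> c * (Y \<bullet> Z)" by (rule fo[OF ZW])
      hence "0 \<le> Z \<bullet> p" by (simp add: p_def inner_diff_right inner_commute)
      thus "0 \<le> Z \<bullet> P" using spos by (simp add: P_def)
    qed
    have WP: "W \<subseteq> hemi P" using WS ZP by (auto simp: hemi_def inner_commute)
    have suppP: "supports P W" by (rule supp_lemma[OF WS PS WP YW PY])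
    obtain Z0 where Z0: "Z0 \<in> W" "Z0 \<bullet> P \<noteq> 0" using interior_dot[OF WS B(6) PS] by blast
    have Z0P: "Z0 \<bullet> P > 0" using Z0 ZP[OF Z0(1)] by simp
    define T where "T = {t. 0 \<le> t \<and> (\<forall>Z\<in>W. t * (Z \<bullet> P) \<le> Z \<bullet> X)}"
    have T0: "0 \<in> T" using XZ by (auto simp: T_def)
    have Tb: "bdd_above T"
    proof (rule bdd_aboveI)
      fix t assume "t \<in> T"
      hence "t * (Z0 \<bullet> P) \<le> Z0 \<bullet> X" using Z0 by (auto simp: T_def)
      thus "t \<le> (Z0 \<bullet> X) / (Z0 \<bullet> P)" using Z0P by (simp add: pos_le_divide_eq)
    qed
    have "T = {0..} \<inter> (\<Inter>Z\<in>W. {t. t * (Z \<bullet> P) \<le> Z \<bullet> X})" by (auto simp: T_def)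
    moreover have "closed ({0..} \<inter> (\<Inter>Z\<in>W. {t::real. t * (Z \<bullet> P) \<le> Z \<bullet> X}))"
      by (intro closed_Int closed_INT ballI closed_Collect_le continuous_intros)
    ultimately have Tc: "closed T" by simp
    define ts where "ts = Sup T"
    have tsT: "ts \<in> T" unfolding ts_def using T0 Tb Tc by (intro closed_contains_Sup) auto
    have "\<exists>Z1\<in>W. Z1 \<bullet> X - ts * (Z1 \<bullet> P) = 0"
    proof (rule ccontr)
      assume "\<not> ?thesis"
      hence pos: "\<forall>Z\<in>W. 0 < Z \<bullet> X - ts * (Z \<bullet> P)" using tsT unfolding T_def by (metis (no_types, lifting) diff_gt_0_iff_gt eq_iff_diff_eq_0 less_eq_real_def mem_Collect_eq)
      have "continuous_on W (\<lambda>Z. Z \<bullet> X - ts * (Z \<bullet> P))" by (intro continuous_intros)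
      then obtain Zm where Zm: "Zm \<in> W" "\<forall>Z\<in>W. Zm \<bullet> X - ts * (Zm \<bullet> P) \<le> Z \<bullet> X - ts * (Z \<bullet> P)"
        using continuous_attains_inf[OF B(3) B(4)] by blast
      define m where "m = Zm \<bullet> X - ts * (Zm \<bullet> P)"
      have m0: "0 < m" using pos Zm by (auto simp: m_def)
      have "ts + m \<in> T" unfolding T_def
      proof (intro CollectI conjI ballI)
        show "0 \<le> ts + m" using tsT m0 by (auto simp: T_def)
        fix Z assume ZW: "Z \<in> W"
        have "Z \<bullet> P \<le> 1" using inner_bound[of Z P] ZW WS PS by auto
        hence "m * (Z \<bullet> P) \<le> m * 1" using m0 by (intro mult_left_mono) auto
        moreover have "m \<le> Z \<bullet> X - ts * (Z \<bullet> P)" using Zm ZW by (auto simp: m_def)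
        ultimately show "(ts + m) * (Z \<bullet> P) \<le> Z \<bullet> X" by (simp add: algebra_simps)
      qed
      hence "ts + m \<le> ts" unfolding ts_def using Tb by (rule cSup_upper)
      with m0 show False by simp
    qed
    then obtain Z1 where Z1: "Z1 \<in> W" "Z1 \<bullet> X - ts * (Z1 \<bullet> P) = 0" by blast
    define V where "V = X - ts *\<^sub>R P"
    have ts0: "0 \<le> ts" using tsT by (auto simp: T_def)
    have VP: "V \<bullet> P < 0" using PX PS ts0 by (simp add: V_def inner_diff_left inner_diff_right Sph_iff inner_commute)
    have ZV: "\<And>Z. Z \<bullet> V = Z \<bullet> X - ts * (Z \<bullet> P)" by (simp add: V_def inner_diff_right)
    have Vnz: "V \<noteq> 0" using VP by auto
    define R where "R = V /\<^sub>R norm V"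
    have RS: "R \<in> Sph" using Vnz by (simp add: R_def Sph_def)
    have Rdot: "\<And>Z. Z \<bullet> R = (Z \<bullet> V) / norm V" by (simp add: R_def divide_inverse mult.commute)
    have ZR: "0 \<le> Z \<bullet> R" if "Z \<in> W" for Z
      using that tsT Rdot[of Z] ZV[of Z] by (auto simp: T_def)
    have WR: "W \<subseteq> hemi R" using WS ZR by (auto simp: hemi_def inner_commute)
    have Z1R: "Z1 \<bullet> R = 0" using Rdot[of Z1] ZV[of Z1] Z1 by simp
    have suppR: "supports R W" by (rule supp_lemma[OF WS RS WR Z1(1) Z1R])
    have RP: "P \<bullet> R < 0" using Rdot[of P] VP Vnz by (simp add: inner_commute divide_neg_pos)
    have "0 \<le> P \<bullet> R"
    proof (rule width_nonneg[OF cw PS suppP RS])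
      show "R \<noteq> P" using RP PS by (auto simp: Sph_iff)
      show "R \<noteq> - P"
      proof
        assume "R = - P"
        hence "Z0 \<bullet> R < 0" using Z0P by simp
        with ZR[OF Z0(1)] show False by simp
      qed
      show "supports R W" by (rule suppR)
      show "W \<subseteq> hemi P \<inter> hemi R" using WP WR by auto
    qed
    with RP show False by simp
  qed
qed

lemma forward:
  fixes W :: "'a::euclidean_space set"
  assumes scb: "spherical_convex_body W" and eq: "W = spolar W"
  shows "constant_width W (pi / 2)"
  unfolding constant_width_def
proof (intro conjI ballI impI)
  note B = scb_basic[OF scb]
  have WS: "W \<subseteq> Sph" using B by auto
  show "0 < pi / 2" "pi / 2 < pi" by auto
  fix P :: 'a assume PS: "P \<in> Sph" and sp: "supports P W"
  obtain X where X: "X \<in> (top_of_set Sph) frontier_of W" "X \<in> (top_of_set Sph) frontier_of (hemi P)"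
    using sp by (auto simp: supports_def)
  have WP: "W \<subseteq> hemi P" using sp by (simp add: supports_def)
  have clW: "closedin (top_of_set Sph) W" using B closed_subset by blast
  have XW: "X \<in> W" using X(1) closure_of_closedin[OF clW] by (auto simp: frontier_of_def)
  have XP: "X \<bullet> P = 0" using frontier_hemi_dot[OF PS X(2)] by simp
  have XS: "X \<in> Sph" using XW WS by auto
  have inpolar: "\<And>Q. Q \<in> Sph \<Longrightarrow> W \<subseteq> hemi Q \<Longrightarrow> Q \<in> W"
  proof -
    fix Q assume "Q \<in> Sph" "W \<subseteq> hemi Q"
    hence "Q \<in> spolar W" by (auto simp: spolar_def hemi_def inner_commute)
    thus "Q \<in> W" using eq by simp
  qed
  have PW: "P \<in> W" using inpolar[OF PS WP] .
  have polarW: "\<And>Q Z. Q \<in> W \<Longrightarrow> Z \<in> W \<Longrightarrow> 0 \<le> Z \<bullet> Q"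
  proof -
    fix Q Z assume "Q \<in> W" "Z \<in> W"
    hence "Q \<in> spolar W" using eq by simp
    with \<open>Z \<in> W\<close> show "0 \<le> Z \<bullet> Q" by (auto simp: spolar_def hemi_def)
  qed
  have WX: "W \<subseteq> hemi X" using WS polarW[OF XW] by (auto simp: hemi_def inner_commute)
  have suppX: "supports X W"
    by (rule supp_lemma[OF WS XS WX PW]) (use XP in \<open>simp add: inner_commute\<close>)
  have "lune_thickness P X \<in> width_candidates P W"
    unfolding width_candidates_def
  proof (intro CollectI exI conjI)
    show "X \<in> Sph" "supports X W" "W \<subseteq> hemi P \<inter> hemi X" using XS suppX WP WX by auto
    show "X \<noteq> P" using XP PS by (auto simp: Sph_iff)
    show "X \<noteq> - P" using XP PS by (auto simp: Sph_iff)
  qed (rule refl)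
  moreover have "lune_thickness P X = pi / 2" using XP by (simp add: lune_thickness_def inner_commute)
  ultimately have mem: "pi / 2 \<in> width_candidates P W" by simp
  show "is_width P W (pi / 2)" unfolding is_width_def
  proof (intro conjI ballI mem)
    fix x assume "x \<in> width_candidates P W"
    then obtain Q where Q: "x = lune_thickness P Q" "Q \<in> Sph" "W \<subseteq> hemi Q"
      unfolding width_candidates_def by blast
    have "Q \<in> W" using inpolar Q by auto
    hence "0 \<le> P \<bullet> Q" using polarW[OF \<open>Q \<in> W\<close> PW] by (simp add: inner_commute)
    hence "arccos (P \<bullet> Q) \<le> arccos 0" using inner_bound[OF PS Q(2)] by (intro arccos_le_arccos) auto
    thus "pi / 2 \<le> x" using Q(1) by (simp add: lune_thickness_def)
  qed
qed


theorem proposition3p2: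
  fixes W :: "'a::euclidean_space set"
  assumes "DIM('a) \<ge> 2"
    and "spherical_convex_body W"
  shows "W = spolar W \<longleftrightarrow> constant_width W (pi / 2)"
proof
  assume "W = spolar W"
  thus "constant_width W (pi / 2)" using forward assms(2) by blast
next
  assume cw: "constant_width W (pi / 2)"
  show "W = spolar W" using goal1[OF assms(2) cw] goal2[OF assms(2) cw] by blast
qed

end
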